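(* For all integers $m,k\ge 1$, the vector $(m,2,k,1)$ is not 0-realizable.
   Context: All graphs are finite, nonempty, and reflexive (every vertex has a loop). $N[v]$ is the closed neighborhood of $v$ (including $v$). For distinct $v,w$, $w$ strictly corners $v$ if $N[v]\subsetneq N[w]$; $v$ is then a strict corner. A vertex dominates a set if adjacent to all its vertices. Corner ranking: set $G^{(1)}=G$, $k=1$. If $G^{(k)}$ is a clique, give all its vertices rank $k$ and stop. Else if $G^{(k)}$ has no strict corners, give all its vertices rank $\infty$ and stop. Else give every strict corner of $G^{(k)}$ rank $k$, delete them to get $G^{(k+1)}$ (induced subgraph), increase $k$ and repeat. The corner rank of $G$ is the largest rank of a vertex; $X_k$ is the set of rank-$k$ vertices. A graph is cop-win iff its corner rank is finite. A graph of finite corner rank $\alpha\ge2$ is of type 1 if some (equivalently every) vertex of rank $\alpha$ dominates $V(G^{(\alpha-1)})$, and of type 0 otherwise. The rank cardinality vector is $(x_\alpha,\dots,x_1)$ with $x_k=|X_k|$. A vector (finite list of positive integers) is 0-realizable if it is the rank cardinality vector of some cop-win graph of type 0. *)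

theory Defs
  imports Main
begin

definition refl_graph :: "'a set \<Rightarrow> ('a \<Rightarrow> 'a \<Rightarrow> bool) \<Rightarrow> bool" where
  "refl_graph V E \<longleftrightarrow> finite V \<and> V \<noteq> {} \<and> (\<forall>v\<in>V. E v v)
     \<and> (\<forall>v\<in>V. \<forall>w\<in>V. E v w \<longrightarrow> E w v)"

definition nbh :: "('a \<Rightarrow> 'a \<Rightarrow> bool) \<Rightarrow> 'a set \<Rightarrow> 'a \<Rightarrow> 'a set" where
  "nbh E S v = {w \<in> S. E v w}"

definition strict_corners :: "('a \<Rightarrow> 'a \<Rightarrow> bool) \<Rightarrow> 'a set \<Rightarrow> 'a set" where
  "strict_corners E S = {v \<in> S. \<exists>w\<in>S. w \<noteq> v \<and> nbh E S v \<subset> nbh E S w}"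

definition is_clique :: "('a \<Rightarrow> 'a \<Rightarrow> bool) \<Rightarrow> 'a set \<Rightarrow> bool" where
  "is_clique E S \<longleftrightarrow> (\<forall>v\<in>S. \<forall>w\<in>S. E v w)"

text \<open>Gstage E V n is the vertex set of G^(n+1) (0-based index).\<close>
primrec Gstage :: "('a \<Rightarrow> 'a \<Rightarrow> bool) \<Rightarrow> 'a set \<Rightarrow> nat \<Rightarrow> 'a set" where
  "Gstage E V 0 = V"
| "Gstage E V (Suc n) = Gstage E V n - strict_corners E (Gstage E V n)"

text \<open>Finite corner rank (equivalently: cop-win).\<close>
definition finite_corner_rank :: "'a set \<Rightarrow> ('a \<Rightarrow> 'a \<Rightarrow> bool) \<Rightarrow> bool" where
  "finite_corner_rank V E \<longleftrightarrow> (\<exists>n. is_clique E (Gstage E V n))"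

text \<open>The corner rank alpha (meaningful when finite).\<close>
definition corner_rank :: "'a set \<Rightarrow> ('a \<Rightarrow> 'a \<Rightarrow> bool) \<Rightarrow> nat" where
  "corner_rank V E = Suc (LEAST n. is_clique E (Gstage E V n))"

text \<open>X_k, the set of vertices of rank k (1-based), for graphs of finite corner rank.\<close>
definition rank_set :: "'a set \<Rightarrow> ('a \<Rightarrow> 'a \<Rightarrow> bool) \<Rightarrow> nat \<Rightarrow> 'a set" where
  "rank_set V E k =
     (if 1 \<le> k \<and> k < corner_rank V E then strict_corners E (Gstage E V (k - 1))
      else if k = corner_rank V E then Gstage E V (k - 1) else {})"

text \<open>Rank cardinality vector (x_alpha, ..., x_1).\<close>
definition rank_card_vector :: "'a set \<Rightarrow> ('a \<Rightarrow> 'a \<Rightarrow> bool) \<Rightarrow> nat list" where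
  "rank_card_vector V E = rev (map (\<lambda>k. card (rank_set V E k)) [1..<Suc (corner_rank V E)])"

text \<open>Type 0: finite corner rank alpha >= 2 and no vertex of rank alpha dominates V(G^(alpha-1)).\<close>
definition type0 :: "'a set \<Rightarrow> ('a \<Rightarrow> 'a \<Rightarrow> bool) \<Rightarrow> bool" where
  "type0 V E \<longleftrightarrow> finite_corner_rank V E \<and> corner_rank V E \<ge> 2 \<and>
     \<not> (\<exists>v\<in>rank_set V E (corner_rank V E).
          \<forall>w\<in>Gstage E V (corner_rank V E - 2). E v w)"

text \<open>0-realizable: rank cardinality vector of some cop-win graph of type 0
  (vertices taken from nat without loss of generality).\<close>
definition zero_realizable :: "nat list \<Rightarrow> bool" where
  "zero_realizable xs \<longleftrightarrow> (\<exists>(V::nat set) E. refl_graph V E \<and> finite_corner_rank V E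
       \<and> type0 V E \<and> rank_card_vector V E = xs)"

end

theory Submission
  imports Defs
begin

lemma scsub: "strict_corners E S \<subseteq> S" unfolding strict_corners_def by blast

locale cfg =
  fixes V :: "'a set" and E :: "'a \<Rightarrow> 'a \<Rightarrow> bool" and x a b :: 'a
    and G2 X2 H K :: "'a set"
  assumes sym: "\<forall>v\<in>V. \<forall>w\<in>V. E v w \<longrightarrow> E w v"
    and refl: "\<forall>v\<in>V. E v v"
    and SC1: "strict_corners E V = {x}"
    and G2_def: "G2 = V - {x}"
    and X2_def: "X2 = strict_corners E G2"
    and H_def: "H = G2 - X2"
    and SC3: "strict_corners E H = {a,b}"
    and K_def: "K = H - {a,b}"
    and ab: "a \<noteq> b"
    and clq: "is_clique E K"
    and nodom: "\<not>(\<exists>v\<in>K. \<forall>w\<in>H. E v w)"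
begin


lemma sub: "K \<subseteq> H" "H \<subseteq> G2" "G2 \<subseteq> V" "X2 \<subseteq> G2" "a \<in> H" "b \<in> H" "x \<in> V" "x \<notin> G2"
proof -
  show "K \<subseteq> H" unfolding K_def by blast
  show "H \<subseteq> G2" unfolding H_def by blast
  show "G2 \<subseteq> V" unfolding G2_def by blast
  show "X2 \<subseteq> G2" unfolding X2_def by (rule scsub)
  show "a \<in> H" "b \<in> H" using scsub[of E H] SC3 by auto
  show "x \<in> V" using scsub[of E V] SC1 by auto
  show "x \<notin> G2" unfolding G2_def by blast
qed

lemma Hsplit: "H = {a,b} \<union> K" using sub K_def by auto

lemma E_sym: "v \<in> V \<Longrightarrow> w \<in> V \<Longrightarrow> E v w \<Longrightarrow> E w v" using sym by blast

lemma L1: assumes "u \<in> K" "E u a" "E u b" shows False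
proof -
  have "\<forall>w\<in>H. E u w" using assms clq Hsplit unfolding is_clique_def by auto
  thus False using nodom assms(1) by blast
qed

lemma scH: "v \<in> {a,b} \<Longrightarrow> \<exists>w\<in>H. w \<noteq> v \<and> nbh E H v \<subset> nbh E H w"
  using SC3 unfolding strict_corners_def by blast

lemma L2: "\<not> E a b"
proof
  assume eab: "E a b"
  have eba: "E b a" using E_sym eab sub by blast
  obtain wa where wa: "wa \<in> H" "wa \<noteq> a" "nbh E H a \<subset> nbh E H wa" using scH by blast
  obtain wb where wb: "wb \<in> H" "wb \<noteq> b" "nbh E H b \<subset> nbh E H wb" using scH by blast
  have aa: "E a a" "E b b" using refl sub by blast+
  have "a \<in> nbh E H a" "b \<in> nbh E H a" "a \<in> nbh E H b" "b \<in> nbh E H b"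
    using aa eab eba sub unfolding nbh_def by auto
  hence A: "E wa a" "E wa b" "E wb a" "E wb b" using wa wb unfolding nbh_def by auto
  show False
  proof (cases "wa \<in> K")
    case True thus False using L1 A by blast
  next
    case False
    hence "wa = b" using wa Hsplit by auto
    show False
    proof (cases "wb \<in> K")
      case True thus False using L1 A by blast
    next
      case False
      hence "wb = a" using wb Hsplit by auto
      thus False using wa wb \<open>wa = b\<close> by auto
    qed
  qed
qed

lemma L3: "\<exists>wa\<in>K. E wa a \<and> nbh E H a \<subset> nbh E H wa"
proof -
  obtain wa where wa: "wa \<in> H" "wa \<noteq> a" "nbh E H a \<subset> nbh E H wa" using scH by blast
  have "a \<in> nbh E H a" using refl sub unfolding nbh_def by auto
  hence "E wa a" using wa unfolding nbh_def by auto
  moreover have "wa \<noteq> b" using L2 E_sym sub \<open>E wa a\<close> by blast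
  ultimately show ?thesis using wa Hsplit by auto
qed

lemma L4b: assumes "z \<in> G2" "d \<in> G2" "d \<noteq> z" "nbh E G2 z \<subset> nbh E G2 d"
  shows "E z x \<and> \<not> E d x"
proof (rule ccontr)
  assume c: "\<not> (E z x \<and> \<not> E d x)"
  have "nbh E V z \<subset> nbh E V d"
  proof
    show "nbh E V z \<subseteq> nbh E V d"
    proof
      fix u assume "u \<in> nbh E V z"
      hence u: "u \<in> V" "E z u" unfolding nbh_def by auto
      show "u \<in> nbh E V d"
      proof (cases "u = x")
        case True thus ?thesis using c u unfolding nbh_def by auto
      next
        case False
        hence "u \<in> nbh E G2 z" using u G2_def unfolding nbh_def by auto
        thus ?thesis using assms(4) sub unfolding nbh_def by auto
      qed
    qed
    obtain u where "u \<in> nbh E G2 d" "u \<notin> nbh E G2 z" using assms(4) by blast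
    thus "nbh E V z \<noteq> nbh E V d" using sub unfolding nbh_def by auto
  qed
  hence "z \<in> strict_corners E V" using assms sub unfolding strict_corners_def by auto
  thus False using SC1 assms(1) sub by auto
qed

lemma L4: assumes "z \<in> X2"
  shows "E z x \<and> (\<exists>d\<in>H. d \<noteq> z \<and> nbh E G2 z \<subset> nbh E G2 d \<and> \<not> E d x)"
proof -
  obtain d where d: "d \<in> G2" "d \<noteq> z" "nbh E G2 z \<subset> nbh E G2 d"
    using assms unfolding X2_def strict_corners_def by blast
  have zG: "z \<in> G2" using assms sub by blast
  have e: "E z x \<and> \<not> E d x" using L4b[OF zG d] .
  have "d \<notin> X2"
  proof
    assume "d \<in> X2"
    then obtain d' where "d' \<in> G2" "d' \<noteq> d" "nbh E G2 d \<subset> nbh E G2 d'"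
      unfolding X2_def strict_corners_def by blast
    thus False using L4b[of d d'] e d(1) by blast
  qed
  thus ?thesis using e d H_def by auto
qed

lemma L5: "\<exists>z\<in>X2. E a z"
proof (rule ccontr)
  assume c: "\<not> (\<exists>z\<in>X2. E a z)"
  obtain wa where wa: "wa \<in> K" "E wa a" "nbh E H a \<subset> nbh E H wa" using L3 by blast
  have "nbh E G2 a = nbh E H a" using c H_def sub unfolding nbh_def by auto
  also have "\<dots> \<subset> nbh E H wa" by fact
  also have "\<dots> \<subseteq> nbh E G2 wa" using sub unfolding nbh_def by auto
  finally have "nbh E G2 a \<subset> nbh E G2 wa" .
  moreover have "wa \<noteq> a" "wa \<in> G2" using wa sub K_def by auto
  ultimately have "a \<in> X2" using sub unfolding X2_def strict_corners_def by auto
  thus False using sub H_def by auto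
qed

lemma L6: assumes "z \<in> X2" "E z a" "E z b" shows False
proof -
  obtain d where d: "d \<in> H" "d \<noteq> z" "nbh E G2 z \<subset> nbh E G2 d" using L4 assms(1) by blast
  have "a \<in> nbh E G2 z" "b \<in> nbh E G2 z" using assms sub unfolding nbh_def by auto
  hence A: "E d a" "E d b" using d unfolding nbh_def by auto
  have "d \<noteq> a" using A L2 by auto
  moreover have "d \<noteq> b" using A L2 E_sym sub by blast
  ultimately have "d \<in> K" using d Hsplit by auto
  thus False using L1 A by blast
qed

lemma L7: assumes "h \<in> K" "\<forall>z\<in>X2. E h z" "E h a" shows False
proof -
  obtain wa where wa: "wa \<in> K" "E wa a" "nbh E H a \<subset> nbh E H wa" using L3 by blast
  have hs: "h \<in> V" "a \<in> V" using assms sub by auto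
  have "nbh E G2 a \<subseteq> nbh E G2 h"
  proof
    fix u assume "u \<in> nbh E G2 a"
    hence u: "u \<in> G2" "E a u" unfolding nbh_def by auto
    have "E h u"
    proof (cases "u \<in> X2")
      case True thus ?thesis using assms by auto
    next
      case False
      hence "u \<in> H" using u H_def by auto
      moreover have "u \<noteq> b" using u L2 by auto
      ultimately have "u = a \<or> u \<in> K" using Hsplit by auto
      thus ?thesis using assms clq unfolding is_clique_def by auto
    qed
    thus "u \<in> nbh E G2 h" using u unfolding nbh_def by auto
  qed
  moreover have "nbh E G2 a \<noteq> nbh E G2 h"
  proof -
    obtain v where v: "v \<in> H" "E wa v" "\<not> E a v" using wa(3) unfolding nbh_def by auto
    have "v \<noteq> b" using L1 wa v by blast
    moreover have "v \<noteq> a" using v refl sub by auto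
    ultimately have "v \<in> K" using v Hsplit by auto
    hence "E h v" using assms clq unfolding is_clique_def by auto
    thus ?thesis using v sub unfolding nbh_def by auto
  qed
  moreover have "h \<noteq> a" "h \<in> G2" using assms sub K_def by auto
  ultimately have "a \<in> X2" using sub unfolding X2_def strict_corners_def by auto
  thus False using sub H_def by auto
qed

end

lemma cfg_swap: "cfg V E x a b G2 X2 H K \<Longrightarrow> cfg V E x b a G2 X2 H K"
  unfolding cfg_def by (auto simp: insert_commute)

lemma cfg_False: assumes "cfg V E x a b G2 X2 H K" shows False
proof -
  interpret c: cfg V E x a b G2 X2 H K by fact
  interpret d: cfg V E x b a G2 X2 H K by (rule cfg_swap[OF assms])
  have L8: "h \<in> K \<Longrightarrow> \<forall>z\<in>X2. E h z \<Longrightarrow> False" for h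
  proof -
    assume h: "h \<in> K" "\<forall>z\<in>X2. E h z"
    have na: "\<not> E h a" using c.L7 h by blast
    have nb: "\<not> E h b" using d.L7 h by blast
    obtain wa where wa: "wa \<in> K" "E wa a" "nbh E H a \<subset> nbh E H wa" using c.L3 by blast
    have ss: "nbh E H h \<subset> nbh E H wa"
    proof
      show "nbh E H h \<subseteq> nbh E H wa"
      proof
        fix u assume "u \<in> nbh E H h"
        hence u: "u \<in> H" "E h u" unfolding nbh_def by auto
        hence "u \<in> K" using na nb c.Hsplit by auto
        thus "u \<in> nbh E H wa" using wa u c.clq unfolding is_clique_def nbh_def by auto
      qed
      show "nbh E H h \<noteq> nbh E H wa" using wa(2) na c.sub(5) unfolding nbh_def by auto
    qed
    have ne: "wa \<noteq> h" using wa na by auto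
    have hH: "h \<in> H" using h c.sub(1) by blast
    have waH: "wa \<in> H" using wa(1) c.sub(1) by blast
    have "h \<in> strict_corners E H" unfolding strict_corners_def
      using ss ne hH waH by (intro CollectI conjI bexI[of _ wa]) auto
    thus False using c.SC3 h c.K_def by auto
  qed
  obtain y where y: "y \<in> V" "y \<noteq> x" "nbh E V x \<subset> nbh E V y"
    using c.SC1 unfolding strict_corners_def by blast
  have yG: "y \<in> G2" using y c.G2_def by auto
  have ey: "\<forall>z\<in>X2. E y z"
  proof
    fix z assume z: "z \<in> X2"
    hence "E z x" using c.L4 by blast
    hence "E x z" using c.E_sym[of z x] c.sub(3,4,7) z by blast
    hence "z \<in> nbh E V x" using z c.sub(3,4) unfolding nbh_def by blast
    thus "E y z" using y unfolding nbh_def by auto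
  qed
  have "\<exists>h\<in>H. \<forall>z\<in>X2. E h z"
  proof (cases "y \<in> X2")
    case False thus ?thesis using yG ey c.H_def by auto
  next
    case True
    then obtain d where d: "d \<in> H" "nbh E G2 y \<subset> nbh E G2 d" using c.L4 by blast
    have "\<forall>z\<in>X2. E d z"
    proof
      fix z assume "z \<in> X2"
      hence "z \<in> nbh E G2 y" using ey c.sub(4) unfolding nbh_def by blast
      thus "E d z" using d unfolding nbh_def by auto
    qed
    thus ?thesis using d by blast
  qed
  then obtain h where h: "h \<in> H" "\<forall>z\<in>X2. E h z" by blast
  have "h \<in> K \<or> h = a \<or> h = b" using h c.Hsplit by auto
  moreover have "h \<noteq> a"
  proof
    assume "h = a"
    obtain z where z: "z \<in> X2" "E b z" using d.L5 by blast
    have "E z a" "E z b" using z h \<open>h = a\<close> c.E_sym[of b z] c.E_sym[of a z] c.sub(3,4) c.sub(2,5,6) by blast+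
    thus False using c.L6 z by blast
  qed
  moreover have "h \<noteq> b"
  proof
    assume "h = b"
    obtain z where z: "z \<in> X2" "E a z" using c.L5 by blast
    have "E z a" "E z b" using z h \<open>h = b\<close> c.E_sym[of b z] c.E_sym[of a z] c.sub(3,4) c.sub(2,5,6) by blast+
    thus False using c.L6 z by blast
  qed
  ultimately show False using L8 h by blast
qed


theorem theorem3p27:
  fixes m k :: nat
  assumes "m \<ge> 1" and "k \<ge> 1"
  shows "\<not> zero_realizable [m, 2, k, 1]"
proof
  assume "zero_realizable [m, 2, k, 1]"
  then obtain V :: "nat set" and E where rg: "refl_graph V E" and fcr: "finite_corner_rank V E"
    and t0: "type0 V E" and rv: "rank_card_vector V E = [m, 2, k, 1]"
    unfolding zero_realizable_def by blast
  have "length (rank_card_vector V E) = corner_rank V E"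
    unfolding rank_card_vector_def by simp
  hence cr: "corner_rank V E = 4" using rv by simp
  have ups: "[1..<Suc 4] = [1,2,3,4]" by (simp add: upt_rec)
  have rv2: "[card (rank_set V E 4), card (rank_set V E 3), card (rank_set V E 2), card (rank_set V E 1)]
      = [m, 2, k, 1]" using rv unfolding rank_card_vector_def cr ups by simp
  have r1: "rank_set V E 1 = strict_corners E V" unfolding rank_set_def cr by simp
  have r3: "rank_set V E 3 = strict_corners E (Gstage E V 2)" unfolding rank_set_def cr by simp
  have r4: "rank_set V E 4 = Gstage E V 3" unfolding rank_set_def cr by simp
  have c1: "card (strict_corners E V) = 1" using rv2 r1 by simp
  then obtain x where SC1: "strict_corners E V = {x}" by (auto simp: card_Suc_eq)
  have c3: "card (strict_corners E (Gstage E V 2)) = 2" using rv2 r3 by simp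
  then obtain a b where ab: "a \<noteq> b" and SC3: "strict_corners E (Gstage E V 2) = {a, b}"
    by (auto simp: card_2_iff)
  define G2 where "G2 = V - {x}"
  define X2 where "X2 = strict_corners E G2"
  define H where "H = G2 - X2"
  define K where "K = H - {a,b}"
  have g1: "Gstage E V 1 = G2" using SC1 unfolding G2_def by simp
  have g2: "Gstage E V 2 = H" using g1 unfolding H_def X2_def by (simp add: numeral_2_eq_2)
  have s3: "Suc 2 = (3::nat)" by simp
  have g3: "Gstage E V 3 = K" using Gstage.simps(2)[of E V 2, unfolded s3] g2 SC3 unfolding K_def by simp
  have "Suc (LEAST n. is_clique E (Gstage E V n)) = 4" using cr unfolding corner_rank_def .
  hence L: "(LEAST n. is_clique E (Gstage E V n)) = 3" by simp
  have "is_clique E (Gstage E V (LEAST n. is_clique E (Gstage E V n)))"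
    using fcr unfolding finite_corner_rank_def by (rule LeastI_ex)
  hence clq: "is_clique E K" using L g3 by simp
  have nodom: "\<not>(\<exists>v\<in>K. \<forall>w\<in>H. E v w)"
    using t0 unfolding type0_def cr r4 g3 using g2 by simp
  have "cfg V E x a b G2 X2 H K"
    unfolding cfg_def using rg SC1 SC3 ab clq nodom g2
    unfolding refl_graph_def G2_def X2_def H_def K_def by auto
  thus False by (rule cfg_False)
qed

end
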